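(* Let $\rho,\sigma$ be commuting quantum states on a finite-dimensional Hilbert space and $\rho',\sigma'$ commuting quantum states on a (possibly different) finite-dimensional Hilbert space, with $\sigma,\sigma'$ both full-rank. If $(\rho,\sigma)\succ(\rho',\sigma')$, then $M_{s_{\min}}(\rho'\|\sigma')\ge M_{s_{\min}}(\rho\|\sigma)$, where $$M_x(\rho\|\sigma):=V(\rho\|\sigma)+\left(\frac{1}{\ln 2}-\log(x)-S(\rho\|\sigma)\right)^2$$ and $s_{\min}$ denotes the smallest eigenvalue of $\sigma$.
   Context: Logs are base 2 unless written $\ln$. $S(\rho\|\sigma)=\mathrm{Tr}(\rho(\log\rho-\log\sigma))$, $V(\rho\|\sigma)=\mathrm{Tr}(\rho(\log\rho-\log\sigma)^2)-S(\rho\|\sigma)^2$. $(\rho,\sigma)\succ(\rho',\sigma')$ means there is a quantum channel $\mathcal E$ with $\mathcal E(\rho)=\rho'$ and $\mathcal E(\sigma)=\sigma'$. *)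

theory Defs
  imports Complex_Main "Jordan_Normal_Form.Spectral_Radius" "Jordan_Normal_Form.Schur_Decomposition"
begin

definition mtrace :: "complex mat \<Rightarrow> complex" where
  "mtrace A = (\<Sum>i<dim_row A. A $$ (i, i))"

definition hermitian_mat :: "nat \<Rightarrow> complex mat \<Rightarrow> bool" where
  "hermitian_mat n A \<longleftrightarrow> A \<in> carrier_mat n n \<and> mat_adjoint A = A"

definition psd_mat :: "nat \<Rightarrow> complex mat \<Rightarrow> bool" where
  "psd_mat n A \<longleftrightarrow> hermitian_mat n A \<and>
     (\<forall>v \<in> carrier_vec n. Re ((A *\<^sub>v v) \<bullet>c v) \<ge> 0)"

definition density_mat :: "nat \<Rightarrow> complex mat \<Rightarrow> bool" where
  "density_mat n \<rho> \<longleftrightarrow> psd_mat n \<rho> \<and> mtrace \<rho> = 1"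

definition unitary_mat :: "nat \<Rightarrow> complex mat \<Rightarrow> bool" where
  "unitary_mat n U \<longleftrightarrow> U \<in> carrier_mat n n \<and> U * mat_adjoint U = 1\<^sub>m n"

definition full_rank_mat :: "complex mat \<Rightarrow> bool" where
  "full_rank_mat A \<longleftrightarrow> 0 \<notin> spectrum A"

definition mat_block :: "nat \<Rightarrow> complex mat \<Rightarrow> nat \<Rightarrow> nat \<Rightarrow> complex mat" where
  "mat_block n M a b = mat n n (\<lambda>(r, s). M $$ (a * n + r, b * n + s))"

text \<open>(id_k \<otimes> E)(M): apply E blockwise to a (k*n) x (k*n) matrix, output of size (k*m) x (k*m)\<close>
definition ampliate :: "nat \<Rightarrow> nat \<Rightarrow> nat \<Rightarrow> (complex mat \<Rightarrow> complex mat) \<Rightarrow> complex mat \<Rightarrow> complex mat" where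
  "ampliate n m k E M = mat (k * m) (k * m)
     (\<lambda>(i, j). E (mat_block n M (i div m) (j div m)) $$ (i mod m, j mod m))"

definition quantum_channel :: "nat \<Rightarrow> nat \<Rightarrow> (complex mat \<Rightarrow> complex mat) \<Rightarrow> bool" where
  "quantum_channel n m E \<longleftrightarrow>
     (\<forall>X \<in> carrier_mat n n. E X \<in> carrier_mat m m) \<and>
     (\<forall>X \<in> carrier_mat n n. \<forall>Y \<in> carrier_mat n n. \<forall>a b :: complex.
          E (a \<cdot>\<^sub>m X + b \<cdot>\<^sub>m Y) = a \<cdot>\<^sub>m E X + b \<cdot>\<^sub>m E Y) \<and>
     (\<forall>X \<in> carrier_mat n n. mtrace (E X) = mtrace X) \<and>
     (\<forall>k M. psd_mat (k * n) M \<longrightarrow> psd_mat (k * m) (ampliate n m k E M))"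

definition majorizes_pair ::
  "nat \<Rightarrow> complex mat \<Rightarrow> complex mat \<Rightarrow> nat \<Rightarrow> complex mat \<Rightarrow> complex mat \<Rightarrow> bool" where
  "majorizes_pair n \<rho> \<sigma> m \<rho>' \<sigma>' \<longleftrightarrow>
     (\<exists>E. quantum_channel n m E \<and> E \<rho> = \<rho>' \<and> E \<sigma> = \<sigma>')"

text \<open>f(A) = U diag(f(\<lambda>_i)) U^* for a spectral decomposition A = U diag(\<lambda>_i) U^*
  (independent of the chosen decomposition)\<close>
definition mat_fun :: "(real \<Rightarrow> real) \<Rightarrow> nat \<Rightarrow> complex mat \<Rightarrow> complex mat" where
  "mat_fun f n A = (SOME B. \<exists>U d. unitary_mat n U \<and>
       A = U * mat_diag n (\<lambda>i. complex_of_real (d i)) * mat_adjoint U \<and>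
       B = U * mat_diag n (\<lambda>i. complex_of_real (f (d i))) * mat_adjoint U)"

text \<open>base-2 logarithm, with the convention log 0 := 0 on the kernel (so 0 log 0 = 0)\<close>
definition log2' :: "real \<Rightarrow> real" where
  "log2' x = (if x > 0 then log 2 x else 0)"

definition mat_log :: "nat \<Rightarrow> complex mat \<Rightarrow> complex mat" where
  "mat_log n A = mat_fun log2' n A"

definition rel_entropy :: "nat \<Rightarrow> complex mat \<Rightarrow> complex mat \<Rightarrow> real" where
  "rel_entropy n \<rho> \<sigma> = Re (mtrace (\<rho> * (mat_log n \<rho> - mat_log n \<sigma>)))"

definition rel_variance :: "nat \<Rightarrow> complex mat \<Rightarrow> complex mat \<Rightarrow> real" where
  "rel_variance n \<rho> \<sigma> =
     Re (mtrace (\<rho> * ((mat_log n \<rho> - mat_log n \<sigma>) * (mat_log n \<rho> - mat_log n \<sigma>))))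
     - (rel_entropy n \<rho> \<sigma>)\<^sup>2"

definition M_quantity :: "real \<Rightarrow> nat \<Rightarrow> complex mat \<Rightarrow> complex mat \<Rightarrow> real" where
  "M_quantity x n \<rho> \<sigma> =
     rel_variance n \<rho> \<sigma> + (1 / ln 2 - log 2 x - rel_entropy n \<rho> \<sigma>)\<^sup>2"

definition min_eigenvalue :: "complex mat \<Rightarrow> real" where
  "min_eigenvalue A = Min (Re ` spectrum A)"

end

theory Submission
  imports Defs
begin

lemma adj_carrier[simp]: "U \<in> carrier_mat n m \<Longrightarrow> mat_adjoint U \<in> carrier_mat m n"
  unfolding mat_adjoint_def by (auto simp: mat_of_rows_def)

lemma adj_dims[simp]: "dim_row (mat_adjoint U) = dim_col U" "dim_col (mat_adjoint U) = dim_row U"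
  unfolding mat_adjoint_def by (auto simp: mat_of_rows_def)

lemma adj_index[simp]: "i < dim_col U \<Longrightarrow> j < dim_row U \<Longrightarrow> mat_adjoint U $$ (i,j) = cnj (U $$ (j,i))"
  unfolding mat_adjoint_def by (auto simp: mat_of_rows_def)

definition sdm :: "nat \<Rightarrow> complex mat \<Rightarrow> (nat \<Rightarrow> complex) \<Rightarrow> complex mat" where
  "sdm n U d = U * mat_diag n d * mat_adjoint U"

lemma sdm_carrier[simp]: "U \<in> carrier_mat n n \<Longrightarrow> sdm n U d \<in> carrier_mat n n"
  unfolding sdm_def by auto

lemma sdm_dims[simp]: "U \<in> carrier_mat n n \<Longrightarrow> dim_row (sdm n U d) = n"
  "U \<in> carrier_mat n n \<Longrightarrow> dim_col (sdm n U d) = n"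
  unfolding sdm_def by auto

lemma sdm_index: assumes U: "U \<in> carrier_mat n n" and i: "i < n" and j: "j < n"
  shows "sdm n U d $$ (i,j) = (\<Sum>l<n. U $$ (i,l) * d l * cnj (U $$ (j,l)))"
proof -
  have "U * mat_diag n d = mat n n (\<lambda>(i,j). U $$ (i,j) * d j)"
    by (rule mat_diag_mult_right[OF U])
  thus ?thesis using U i j unfolding sdm_def
    by (auto simp: scalar_prod_def row_def col_def lessThan_atLeast0 intro!: sum.cong)
qed

lemma unitary_carrier: "unitary_mat n U \<Longrightarrow> U \<in> carrier_mat n n"
  unfolding unitary_mat_def by auto

lemma unitary_rows: assumes "unitary_mat n U" "i < n" "j < n"
  shows "(\<Sum>l<n. U $$ (i,l) * cnj (U $$ (j,l))) = (if i = j then 1 else 0)"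
proof -
  have U: "U \<in> carrier_mat n n" and e: "U * mat_adjoint U = 1\<^sub>m n" using assms unfolding unitary_mat_def by auto
  have "(U * mat_adjoint U) $$ (i,j) = (\<Sum>l<n. U $$ (i,l) * cnj (U $$ (j,l)))"
    using U assms by (auto simp: scalar_prod_def row_def col_def lessThan_atLeast0 intro!: sum.cong)
  thus ?thesis using e assms by auto
qed

lemma unitary_adj_mult: assumes "unitary_mat n U" shows "mat_adjoint U * U = 1\<^sub>m n"
proof -
  have U: "U \<in> carrier_mat n n" and e: "U * mat_adjoint U = 1\<^sub>m n" using assms unfolding unitary_mat_def by auto
  show ?thesis by (rule mat_mult_left_right_inverse[OF U _ e], insert U, auto)
qed

lemma unitary_cols: assumes "unitary_mat n U" "i < n" "j < n"
  shows "(\<Sum>l<n. cnj (U $$ (l,i)) * U $$ (l,j)) = (if i = j then 1 else 0)"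
proof -
  have U: "U \<in> carrier_mat n n" using assms unfolding unitary_mat_def by auto
  have e: "mat_adjoint U * U = 1\<^sub>m n" by (rule unitary_adj_mult[OF assms(1)])
  have "(mat_adjoint U * U) $$ (i,j) = (\<Sum>l<n. cnj (U $$ (l,i)) * U $$ (l,j))"
    using U assms by (auto simp: scalar_prod_def row_def col_def lessThan_atLeast0 intro!: sum.cong)
  thus ?thesis using e assms by auto
qed



lemma sq_mult_carrier[simp]: "A \<in> carrier_mat n n \<Longrightarrow> B \<in> carrier_mat n n \<Longrightarrow> A * B \<in> carrier_mat n n"
  by auto

lemma adjoint_mult: fixes A B :: "complex mat" assumes A: "A \<in> carrier_mat n k" and B: "B \<in> carrier_mat k m"
  shows "mat_adjoint (A * B) = mat_adjoint B * mat_adjoint A"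
proof (rule eq_matI)
  fix i j assume i: "i < dim_row (mat_adjoint B * mat_adjoint A)" and j: "j < dim_col (mat_adjoint B * mat_adjoint A)"
  hence i': "i < m" and j': "j < n" using A B by auto
  show "mat_adjoint (A * B) $$ (i, j) = (mat_adjoint B * mat_adjoint A) $$ (i, j)"
    using i' j' A B by (auto simp: scalar_prod_def row_def col_def ac_simps intro!: sum.cong)
qed (insert A B, auto)

lemma adjoint_adjoint: "mat_adjoint (mat_adjoint A) = (A :: complex mat)"
proof (rule eq_matI)
  fix i j assume "i < dim_row A" "j < dim_col A"
  thus "mat_adjoint (mat_adjoint A) $$ (i, j) = A $$ (i, j)" by (subst adj_index, auto)
qed auto

lemma unitary_mult: assumes "unitary_mat n U" "unitary_mat n V" shows "unitary_mat n (U * V)"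
proof -
  have U: "U \<in> carrier_mat n n" and V: "V \<in> carrier_mat n n" using assms unfolding unitary_mat_def by auto
  have aU: "mat_adjoint U \<in> carrier_mat n n" and aV: "mat_adjoint V \<in> carrier_mat n n" using U V by auto
  have "U * V * mat_adjoint (U * V) = U * V * (mat_adjoint V * mat_adjoint U)"
    by (simp add: adjoint_mult[OF U V])
  also have "\<dots> = U * (V * mat_adjoint V * mat_adjoint U)"
    using U V aU aV by (simp add: assoc_mult_mat[of _ n n _ n _ n])
  also have "\<dots> = U * (V * mat_adjoint V) * mat_adjoint U"
    using U V aU aV by (simp add: assoc_mult_mat[of _ n n _ n _ n])
  also have "\<dots> = 1\<^sub>m n" using assms U unfolding unitary_mat_def by auto
  finally show ?thesis using U V unfolding unitary_mat_def by auto
qed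

lemma sdm_conj: assumes W: "W \<in> carrier_mat n n" and V: "V \<in> carrier_mat n n"
  shows "W * sdm n V d * mat_adjoint W = sdm n (W * V) d"
proof -
  have aW: "mat_adjoint W \<in> carrier_mat n n" and aV: "mat_adjoint V \<in> carrier_mat n n" 
    and D: "mat_diag n d \<in> carrier_mat n n" using W V by auto
  have "W * sdm n V d * mat_adjoint W = W * (V * mat_diag n d * mat_adjoint V * mat_adjoint W)"
    unfolding sdm_def using W V aW aV D by (simp add: assoc_mult_mat[of _ n n _ n _ n])
  also have "\<dots> = W * (V * mat_diag n d * (mat_adjoint V * mat_adjoint W))"
    using W V aW aV D by (simp add: assoc_mult_mat[of _ n n _ n _ n])
  also have "\<dots> = W * (V * mat_diag n d) * (mat_adjoint V * mat_adjoint W)"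
    using W V aW aV D by (simp add: assoc_mult_mat[of _ n n _ n _ n])
  also have "\<dots> = sdm n (W * V) d" unfolding sdm_def adjoint_mult[OF W V, symmetric]
    using W V aW aV D by (metis assoc_mult_mat)
  finally show ?thesis .
qed

lemma cdot_self: "v \<bullet>c v = complex_of_real (\<Sum>i<dim_vec v. (cmod (v $ i))^2)"
proof -
  have "v \<bullet>c v = (\<Sum>i<dim_vec v. complex_of_real ((cmod (v $ i))^2))"
    unfolding scalar_prod_def lessThan_atLeast0 by (rule sum.cong, simp, subst complex_norm_square, simp)
  thus ?thesis by simp
qed

lemma unit_completion: assumes v: "v \<in> carrier_vec n" and v0: "v \<noteq> 0\<^sub>v n"
  shows "\<exists>W c. unitary_mat n W \<and> col W 0 = c \<cdot>\<^sub>v v"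
proof -
  interpret cof_vec_space n "TYPE(complex)" .
  define b where "b = basis_completion v"
  define ws where "ws = gram_schmidt n b"
  from basis_completion[OF v v0, folded b_def]
  have dist_b: "distinct b" 
    and indep: "\<not> lin_dep (set b)" and b: "set b \<subseteq> carrier_vec n" and hdb: "hd b = v" 
    and len_b: "length b = n" by auto
  have n: "n > 0" using v v0 by (cases n, auto)
  from hdb len_b n obtain vs where bv: "b = v # vs" by (cases b, auto)
  from gram_schmidt_result[OF b dist_b indep refl, folded ws_def]
  have ws: "set ws \<subseteq> carrier_vec n" "corthogonal ws" "length ws = n" 
    by (auto simp: len_b)
  from gram_schmidt_hd[OF v, of vs, folded bv] have hdws: "hd ws = v" unfolding ws_def .
  define nr where "nr = (\<lambda>w::complex vec. sqrt (\<Sum>i<n. (cmod (w $ i))^2))"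
  define ws' where "ws' = map (\<lambda>w. complex_of_real (1 / nr w) \<cdot>\<^sub>v w) ws"
  define W where "W = mat_of_cols n ws'"
  have wsc: "\<And>i. i < n \<Longrightarrow> ws ! i \<in> carrier_vec n" using ws by auto
  have ws'i: "\<And>i. i < n \<Longrightarrow> ws' ! i = complex_of_real (1 / nr (ws ! i)) \<cdot>\<^sub>v (ws ! i)"
    unfolding ws'_def using ws by auto
  have Wc: "W \<in> carrier_mat n n" unfolding W_def ws'_def using ws by auto
  have Wij: "\<And>i j. i < n \<Longrightarrow> j < n \<Longrightarrow> W $$ (i,j) = complex_of_real (1 / nr (ws ! j)) * (ws ! j $ i)"
  proof -
    fix i j assume i: "i < n" and j: "j < n"
    have "W $$ (i,j) = ws' ! j $ i" unfolding W_def using i j ws by (auto simp: mat_of_cols_def ws'_def)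
    also have "\<dots> = complex_of_real (1 / nr (ws ! j)) * (ws ! j $ i)" unfolding ws'i[OF j]
      using wsc[OF j] i by (subst index_smult_vec, auto)
    finally show "W $$ (i,j) = complex_of_real (1 / nr (ws ! j)) * (ws ! j $ i)" .
  qed
  have nrpos: "nr (ws ! i) > 0" if i: "i < n" for i
  proof -
    have "ws ! i \<bullet>c ws ! i \<noteq> 0" using corthogonalD[OF ws(2)] i ws by auto
    hence "(\<Sum>l<n. (cmod (ws ! i $ l))^2) \<noteq> 0" using cdot_self[of "ws ! i"] wsc[OF i] 
      by (metis carrier_vecD of_real_0)
    moreover have "(\<Sum>l<n. (cmod (ws ! i $ l))^2) \<ge> 0" by (auto intro: sum_nonneg)
    ultimately show ?thesis unfolding nr_def by auto
  qed
  have inner: "(\<Sum>l<n. cnj (W $$ (l,i)) * W $$ (l,j)) = (if i = j then 1 else 0)" if i: "i < n" and j: "j < n" for i j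
  proof -
    have "(\<Sum>l<n. cnj (W $$ (l,i)) * W $$ (l,j)) = complex_of_real (1 / nr (ws ! i)) * complex_of_real (1 / nr (ws ! j)) * (ws ! j \<bullet>c ws ! i)"
      using i j wsc[OF i] wsc[OF j] by (auto simp: Wij scalar_prod_def sum_distrib_left lessThan_atLeast0 intro!: sum.cong)
    also have "\<dots> = (if i = j then 1 else 0)"
    proof (cases "i = j")
      case True
      have "ws ! j \<bullet>c ws ! j = complex_of_real ((nr (ws ! j))^2)" unfolding cdot_self nr_def
        using wsc[OF j] by (simp add: sum_nonneg)
      thus ?thesis using True nrpos[OF j] by (simp add: power2_eq_square field_simps)
    next
      case False
      thus ?thesis using corthogonalD[OF ws(2)] i j ws by auto
    qed
    finally show ?thesis .
  qed
  have "mat_adjoint W * W = 1\<^sub>m n"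
    by (rule eq_matI, insert Wc inner, auto simp: scalar_prod_def row_def col_def lessThan_atLeast0)
  hence "W * mat_adjoint W = 1\<^sub>m n" using mat_mult_left_right_inverse[of "mat_adjoint W" n W] Wc by auto
  hence U: "unitary_mat n W" using Wc unfolding unitary_mat_def by auto
  have "ws ! 0 = v" using hdws ws n by (cases ws, auto)
  moreover have "col W 0 = ws' ! 0" unfolding W_def 
    by (rule col_mat_of_cols, insert ws n, auto simp: ws'_def)
  ultimately have "col W 0 = complex_of_real (1 / nr v) \<cdot>\<^sub>v v"
    using ws'i[OF n] by auto
  with U show ?thesis by blast
qed



lemma normal_spectral:
  fixes N :: "complex mat"
  assumes "N \<in> carrier_mat n n" and "N * mat_adjoint N = mat_adjoint N * N"
  shows "\<exists>U d. unitary_mat n U \<and> N = sdm n U d"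
  using assms
proof (induction n arbitrary: N)
  case 0
  have "unitary_mat 0 (1\<^sub>m 0)" unfolding unitary_mat_def by (auto intro!: eq_matI)
  moreover have "N = sdm 0 (1\<^sub>m 0) (\<lambda>_. 0)" using 0 by (intro eq_matI, auto)
  ultimately show ?case by blast
next
  case (Suc k N)
  define n where "n = Suc k"
  have N: "N \<in> carrier_mat n n" using Suc n_def by auto
  have normal: "N * mat_adjoint N = mat_adjoint N * N" using Suc by auto
  obtain e where "e \<in> spectrum N" using spectrum_non_empty[OF N] n_def by auto
  then obtain v where v: "v \<in> carrier_vec n" "v \<noteq> 0\<^sub>v n" and ev: "N *\<^sub>v v = e \<cdot>\<^sub>v v"
    unfolding spectrum_def eigenvalue_def eigenvector_def using N by auto
  obtain W c where W: "unitary_mat n W" and Wc: "col W 0 = c \<cdot>\<^sub>v v" using unit_completion[OF v] by blast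
  have Wm: "W \<in> carrier_mat n n" using W unitary_carrier by auto
  have aW: "mat_adjoint W \<in> carrier_mat n n" using Wm by auto
  have aN: "mat_adjoint N \<in> carrier_mat n n" using N by auto
  have WWa: "W * mat_adjoint W = 1\<^sub>m n" using W unfolding unitary_mat_def by auto
  have WaW: "mat_adjoint W * W = 1\<^sub>m n" using unitary_adj_mult[OF W] .
  define A where "A = mat_adjoint W * (N * W)"
  have A: "A \<in> carrier_mat n n" unfolding A_def using Wm N aW by auto
  have evW: "N *\<^sub>v col W 0 = e \<cdot>\<^sub>v col W 0"
  proof -
    have "N *\<^sub>v (c \<cdot>\<^sub>v v) = c \<cdot>\<^sub>v (e \<cdot>\<^sub>v v)" using mult_mat_vec[OF N v(1)] ev by simp
    also have "\<dots> = e \<cdot>\<^sub>v (c \<cdot>\<^sub>v v)" by (intro eq_vecI, auto)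
    finally show ?thesis unfolding Wc .
  qed
  have col0: "A $$ (i,0) = (if i = 0 then e else 0)" if i: "i < n" for i
  proof -
    have "A $$ (i,0) = row (mat_adjoint W) i \<bullet> col (N * W) 0" unfolding A_def
      using i N Wm aW n_def by (subst index_mult_mat, auto)
    also have "col (N * W) 0 = e \<cdot>\<^sub>v col W 0" using evW N Wm n_def by (subst col_mult2, auto)
    also have "row (mat_adjoint W) i \<bullet> (e \<cdot>\<^sub>v col W 0) = e * (row (mat_adjoint W) i \<bullet> col W 0)"
      using i aW Wm n_def by (subst scalar_prod_smult_distrib[of _ n], auto simp: col_def)
    also have "row (mat_adjoint W) i \<bullet> col W 0 = (mat_adjoint W * W) $$ (i,0)"
      using i aW Wm n_def by (subst index_mult_mat, auto)
    finally show ?thesis using WaW i n_def by auto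
  qed
  have adjA: "mat_adjoint A = mat_adjoint W * (mat_adjoint N * W)"
    unfolding A_def using Wm N aW aN
    by (simp add: adjoint_mult[of _ n n _ n] adjoint_adjoint assoc_mult_mat[of _ n n _ n _ n])
  have normalA: "A * mat_adjoint A = mat_adjoint A * A"
  proof -
    have "A * mat_adjoint A = mat_adjoint W * (N * (W * mat_adjoint W) * (mat_adjoint N * W))"
      unfolding adjA unfolding A_def using Wm N aW aN by (simp add: assoc_mult_mat[of _ n n _ n _ n])
    also have "\<dots> = mat_adjoint W * (N * mat_adjoint N * W)" unfolding WWa
      using Wm N aW aN by (simp add: assoc_mult_mat[of _ n n _ n _ n])
    also have "\<dots> = mat_adjoint W * (mat_adjoint N * (W * mat_adjoint W) * (N * W))" unfolding WWa normal
      using Wm N aW aN by (simp add: assoc_mult_mat[of _ n n _ n _ n])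
    also have "\<dots> = mat_adjoint A * A" unfolding adjA unfolding A_def
      using Wm N aW aN by (simp add: assoc_mult_mat[of _ n n _ n _ n])
    finally show ?thesis .
  qed
  have entryAA: "(A * mat_adjoint A) $$ (i,j) = (\<Sum>l<n. A $$ (i,l) * cnj (A $$ (j,l)))" if "i < n" "j < n" for i j
    using that A by (auto simp: scalar_prod_def row_def col_def lessThan_atLeast0 intro!: sum.cong)
  have entryAA': "(mat_adjoint A * A) $$ (i,j) = (\<Sum>l<n. cnj (A $$ (l,i)) * A $$ (l,j))" if "i < n" "j < n" for i j
    using that A by (auto simp: scalar_prod_def row_def col_def lessThan_atLeast0 intro!: sum.cong)
  have row0: "A $$ (0,j) = 0" if j: "j < n" "j \<noteq> 0" for j
  proof -
    have "(\<Sum>l<n. A $$ (0,l) * cnj (A $$ (0,l))) = (\<Sum>l<n. cnj (A $$ (l,0)) * A $$ (l,0))"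
      using normalA entryAA[of 0 0] entryAA'[of 0 0] n_def by auto
    also have "\<dots> = cnj e * e" using col0 n_def
      by (simp add: lessThan_Suc_eq_insert_0 sum.reindex)
    finally have eq: "(\<Sum>l<n. A $$ (0,l) * cnj (A $$ (0,l))) = cnj e * e" .
    have "(\<Sum>l<n. A $$ (0,l) * cnj (A $$ (0,l))) = A $$ (0,0) * cnj (A $$ (0,0)) + (\<Sum>l<k. A $$ (0,Suc l) * cnj (A $$ (0,Suc l)))"
      unfolding n_def by (rule sum.lessThan_Suc_shift)
    with eq col0[of 0] n_def have "(\<Sum>l<k. A $$ (0,Suc l) * cnj (A $$ (0,Suc l))) = 0" by (auto simp: mult.commute)
    hence "(\<Sum>l<k. complex_of_real ((cmod (A $$ (0,Suc l)))^2)) = 0"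
      by (metis (no_types, lifting) complex_norm_square sum.cong)
    hence "(\<Sum>l<k. (cmod (A $$ (0,Suc l)))^2) = 0" by (metis of_real_0 of_real_eq_iff of_real_sum)
    hence "\<forall>l \<in> {..<k}. (cmod (A $$ (0,Suc l)))^2 = 0" by (subst (asm) sum_nonneg_eq_0_iff, auto)
    moreover obtain l where "j = Suc l" "l < k" using j n_def by (cases j, auto)
    ultimately show ?thesis by auto
  qed
  define A3 where "A3 = mat k k (\<lambda>(i,j). A $$ (Suc i, Suc j))"
  have A3: "A3 \<in> carrier_mat k k" unfolding A3_def by auto
  have normal3: "A3 * mat_adjoint A3 = mat_adjoint A3 * A3"
  proof (rule eq_matI)
    fix i j assume "i < dim_row (mat_adjoint A3 * A3)" "j < dim_col (mat_adjoint A3 * A3)"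
    hence i: "i < k" and j: "j < k" using A3 by auto
    have "(A3 * mat_adjoint A3) $$ (i,j) = (\<Sum>l<k. A $$ (Suc i, Suc l) * cnj (A $$ (Suc j, Suc l)))"
      using i j A3 by (auto simp: scalar_prod_def row_def col_def lessThan_atLeast0 A3_def intro!: sum.cong)
    also have "\<dots> = (A * mat_adjoint A) $$ (Suc i, Suc j)"
    proof -
      have "(A * mat_adjoint A) $$ (Suc i, Suc j) = (\<Sum>l<Suc k. A $$ (Suc i, l) * cnj (A $$ (Suc j, l)))"
        using entryAA i j n_def by auto
      also have "\<dots> = A $$ (Suc i, 0) * cnj (A $$ (Suc j, 0)) + (\<Sum>l<k. A $$ (Suc i, Suc l) * cnj (A $$ (Suc j, Suc l)))"
        by (rule sum.lessThan_Suc_shift)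
      finally show ?thesis using col0[of "Suc i"] i n_def by simp
    qed
    also have "\<dots> = (mat_adjoint A * A) $$ (Suc i, Suc j)" using normalA by simp
    also have "\<dots> = (\<Sum>l<k. cnj (A $$ (Suc l, Suc i)) * A $$ (Suc l, Suc j))"
    proof -
      have "(mat_adjoint A * A) $$ (Suc i, Suc j) = (\<Sum>l<Suc k. cnj (A $$ (l, Suc i)) * A $$ (l, Suc j))"
        using entryAA' i j n_def by auto
      also have "\<dots> = cnj (A $$ (0, Suc i)) * A $$ (0, Suc j) + (\<Sum>l<k. cnj (A $$ (Suc l, Suc i)) * A $$ (Suc l, Suc j))"
        by (rule sum.lessThan_Suc_shift)
      finally show ?thesis using row0[of "Suc i"] i n_def by simp
    qed
    also have "\<dots> = (mat_adjoint A3 * A3) $$ (i,j)"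
      using i j A3 by (auto simp: scalar_prod_def row_def col_def lessThan_atLeast0 A3_def intro!: sum.cong)
    finally show "(A3 * mat_adjoint A3) $$ (i,j) = (mat_adjoint A3 * A3) $$ (i,j)" .
  qed (insert A3, auto)
  obtain U3 d3 where U3: "unitary_mat k U3" and A3d: "A3 = sdm k U3 d3" using Suc.IH[OF A3 normal3] by blast
  have U3m: "U3 \<in> carrier_mat k k" using U3 unitary_carrier by auto
  define V where "V = mat n n (\<lambda>(i,j). if i = 0 then (if j = 0 then 1 else 0) else if j = 0 then 0 else U3 $$ (i-1, j-1))"
  define d where "d = (\<lambda>i. if i = 0 then e else d3 (i - 1))"
  have Vm: "V \<in> carrier_mat n n" unfolding V_def by auto
  have V: "unitary_mat n V" unfolding unitary_mat_def
  proof (intro conjI Vm eq_matI)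
    fix i j assume "i < dim_row (1\<^sub>m n :: complex mat)" "j < dim_col (1\<^sub>m n :: complex mat)"
    hence i: "i < n" and j: "j < n" by auto
    have "(V * mat_adjoint V) $$ (i,j) = (\<Sum>l<n. V $$ (i,l) * cnj (V $$ (j,l)))"
      using i j Vm by (auto simp: scalar_prod_def row_def col_def lessThan_atLeast0 intro!: sum.cong)
    also have "\<dots> = V $$ (i,0) * cnj (V $$ (j,0)) + (\<Sum>l<k. V $$ (i,Suc l) * cnj (V $$ (j,Suc l)))"
      unfolding n_def by (rule sum.lessThan_Suc_shift)
    also have "\<dots> = 1\<^sub>m n $$ (i,j)"
    proof (cases "i = 0 \<or> j = 0")
      case True thus ?thesis using i j unfolding V_def n_def by auto
    next
      case False
      then obtain i' j' where ij: "i = Suc i'" "j = Suc j'" by (cases i; cases j, auto)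
      hence "i' < k" "j' < k" using i j n_def by auto
      thus ?thesis using unitary_rows[OF U3, of i' j'] unfolding ij V_def n_def by auto
    qed
    finally show "(V * mat_adjoint V) $$ (i,j) = 1\<^sub>m n $$ (i,j)" .
  qed (insert Vm, auto)
  have AV: "A = sdm n V d"
  proof (rule eq_matI)
    fix i j assume "i < dim_row (sdm n V d)" "j < dim_col (sdm n V d)"
    hence i: "i < n" and j: "j < n" using Vm by auto
    have "sdm n V d $$ (i,j) = (\<Sum>l<n. V $$ (i,l) * d l * cnj (V $$ (j,l)))" by (rule sdm_index[OF Vm i j])
    also have "\<dots> = V $$ (i,0) * d 0 * cnj (V $$ (j,0)) + (\<Sum>l<k. V $$ (i,Suc l) * d (Suc l) * cnj (V $$ (j,Suc l)))"
      unfolding n_def by (rule sum.lessThan_Suc_shift)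
    also have "\<dots> = A $$ (i,j)"
    proof (cases "i = 0 \<or> j = 0")
      case True thus ?thesis using i j col0 row0 unfolding V_def n_def d_def by auto
    next
      case False
      then obtain i' j' where ij: "i = Suc i'" "j = Suc j'" by (cases i; cases j, auto)
      hence ij': "i' < k" "j' < k" using i j n_def by auto
      have "A $$ (i,j) = A3 $$ (i',j')" unfolding A3_def ij using ij' by auto
      also have "\<dots> = (\<Sum>l<k. U3 $$ (i',l) * d3 l * cnj (U3 $$ (j',l)))" unfolding A3d by (rule sdm_index[OF U3m ij'])
      finally show ?thesis unfolding ij V_def n_def d_def using ij' by auto
    qed
    finally show "A $$ (i,j) = sdm n V d $$ (i,j)" ..
  qed (insert A Vm, auto)
  have "N = W * A * mat_adjoint W"
  proof -
    have "W * A * mat_adjoint W = (W * mat_adjoint W) * N * (W * mat_adjoint W)"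
      unfolding A_def using Wm N aW by (simp add: assoc_mult_mat[of _ n n _ n _ n])
    thus ?thesis unfolding WWa using N by simp
  qed
  also have "\<dots> = sdm n (W * V) d" unfolding AV by (rule sdm_conj[OF Wm Vm])
  finally show ?case using unitary_mult[OF W V] n_def by blast
qed



lemma hermitian_entry: "hermitian_mat n A \<Longrightarrow> i < n \<Longrightarrow> j < n \<Longrightarrow> A $$ (i,j) = cnj (A $$ (j,i))"
  unfolding hermitian_mat_def by (metis adj_index carrier_matD(1) carrier_matD(2))

lemma commuting_hermitian_diag:
  assumes hA: "hermitian_mat n A" and hB: "hermitian_mat n B" and AB: "A * B = B * A"
  shows "\<exists>U a b. unitary_mat n U \<and> A = sdm n U (\<lambda>i. complex_of_real (a i)) \<and> B = sdm n U (\<lambda>i. complex_of_real (b i))"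
proof -
  have A: "A \<in> carrier_mat n n" and B: "B \<in> carrier_mat n n" using hA hB unfolding hermitian_mat_def by auto
  define N where "N = A + \<i> \<cdot>\<^sub>m B"
  have N: "N \<in> carrier_mat n n" unfolding N_def using A B by auto
  have Nij: "N $$ (i,j) = A $$ (i,j) + \<i> * B $$ (i,j)" if "i < n" "j < n" for i j
    unfolding N_def using that A B by auto
  have cNij: "cnj (N $$ (i,j)) = A $$ (j,i) - \<i> * B $$ (j,i)" if "i < n" "j < n" for i j
    using that by (simp add: Nij hermitian_entry[OF hA, of j i] hermitian_entry[OF hB, of j i])
  have comm: "(\<Sum>l<n. A $$ (i,l) * B $$ (l,j)) = (\<Sum>l<n. B $$ (i,l) * A $$ (l,j))" if "i < n" "j < n" for i j
  proof -
    have "(A * B) $$ (i,j) = (B * A) $$ (i,j)" using AB by simp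
    thus ?thesis using that A B by (auto simp: scalar_prod_def row_def col_def lessThan_atLeast0)
  qed
  have normal: "N * mat_adjoint N = mat_adjoint N * N"
  proof (rule eq_matI)
    fix i j assume "i < dim_row (mat_adjoint N * N)" "j < dim_col (mat_adjoint N * N)"
    hence i: "i < n" and j: "j < n" using N by auto
    have "(N * mat_adjoint N) $$ (i,j) = (\<Sum>l<n. N $$ (i,l) * cnj (N $$ (j,l)))"
      using i j N by (auto simp: scalar_prod_def row_def col_def lessThan_atLeast0 intro!: sum.cong)
    also have "\<dots> = (\<Sum>l<n. (A $$ (i,l) + \<i> * B $$ (i,l)) * (A $$ (l,j) - \<i> * B $$ (l,j)))"
      by (intro sum.cong refl, simp only: cNij[OF j] lessThan_iff, simp add: Nij i)
    also have "\<dots> = (\<Sum>l<n. (A $$ (i,l) - \<i> * B $$ (i,l)) * (A $$ (l,j) + \<i> * B $$ (l,j)))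
       + 2 * \<i> * ((\<Sum>l<n. B $$ (i,l) * A $$ (l,j)) - (\<Sum>l<n. A $$ (i,l) * B $$ (l,j)))"
    proof -
      have "(\<Sum>l<n. (A $$ (i,l) + \<i> * B $$ (i,l)) * (A $$ (l,j) - \<i> * B $$ (l,j)))
        = (\<Sum>l<n. (A $$ (i,l) - \<i> * B $$ (i,l)) * (A $$ (l,j) + \<i> * B $$ (l,j))
            + 2 * \<i> * (B $$ (i,l) * A $$ (l,j) - A $$ (i,l) * B $$ (l,j)))"
        by (rule sum.cong, simp, simp add: algebra_simps)
      also have "\<dots> = (\<Sum>l<n. (A $$ (i,l) - \<i> * B $$ (i,l)) * (A $$ (l,j) + \<i> * B $$ (l,j)))
       + 2 * \<i> * ((\<Sum>l<n. B $$ (i,l) * A $$ (l,j)) - (\<Sum>l<n. A $$ (i,l) * B $$ (l,j)))"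
        by (simp only: sum.distrib sum_subtractf[symmetric] sum_distrib_left)
      finally show ?thesis .
    qed
    also have "\<dots> = (\<Sum>l<n. (A $$ (i,l) - \<i> * B $$ (i,l)) * (A $$ (l,j) + \<i> * B $$ (l,j)))"
      using comm[OF i j] by simp
    also have "\<dots> = (\<Sum>l<n. cnj (N $$ (l,i)) * N $$ (l,j))"
      by (intro sum.cong refl, simp only: cNij[OF _ i] lessThan_iff, simp add: Nij j)
    also have "\<dots> = (mat_adjoint N * N) $$ (i,j)"
      using i j N by (auto simp: scalar_prod_def row_def col_def lessThan_atLeast0 intro!: sum.cong)
    finally show "(N * mat_adjoint N) $$ (i,j) = (mat_adjoint N * N) $$ (i,j)" .
  qed (insert N, auto)
  obtain U d where U: "unitary_mat n U" and Nd: "N = sdm n U d" using normal_spectral[OF N normal] by blast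
  have Um: "U \<in> carrier_mat n n" using U unitary_carrier by auto
  have key: "N $$ (i,j) + c * cnj (N $$ (j,i)) = (\<Sum>l<n. U $$ (i,l) * (d l + c * cnj (d l)) * cnj (U $$ (j,l)))"
    if "i < n" "j < n" for i j c
  proof -
    have "N $$ (i,j) + c * cnj (N $$ (j,i)) = (\<Sum>l<n. U $$ (i,l) * d l * cnj (U $$ (j,l))) 
       + (\<Sum>l<n. c * (U $$ (i,l) * cnj (d l) * cnj (U $$ (j,l))))"
      unfolding Nd using that by (simp add: sdm_index[OF Um] cnj_sum sum_distrib_left mult_ac)
    also have "\<dots> = (\<Sum>l<n. U $$ (i,l) * d l * cnj (U $$ (j,l)) + c * (U $$ (i,l) * cnj (d l) * cnj (U $$ (j,l))))"
      by (simp only: sum.distrib)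
    also have "\<dots> = (\<Sum>l<n. U $$ (i,l) * (d l + c * cnj (d l)) * cnj (U $$ (j,l)))"
      by (rule sum.cong, simp, simp add: algebra_simps)
    finally show ?thesis .
  qed
  have "A = sdm n U (\<lambda>i. complex_of_real (Re (d i)))"
  proof (rule eq_matI)
    fix i j assume "i < dim_row (sdm n U (\<lambda>i. complex_of_real (Re (d i))))" "j < dim_col (sdm n U (\<lambda>i. complex_of_real (Re (d i))))"
    hence i: "i < n" and j: "j < n" using Um by auto
    have "2 * A $$ (i,j) = N $$ (i,j) + 1 * cnj (N $$ (j,i))"
      using i j by (simp add: Nij hermitian_entry[OF hA, of j i] hermitian_entry[OF hB, of j i])
    also have "\<dots> = (\<Sum>l<n. U $$ (i,l) * (2 * complex_of_real (Re (d l))) * cnj (U $$ (j,l)))"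
      unfolding key[OF i j] by (intro sum.cong refl, simp add: complex_add_cnj)
    also have "\<dots> = 2 * sdm n U (\<lambda>i. complex_of_real (Re (d i))) $$ (i,j)"
      by (simp add: sdm_index[OF Um i j] sum_distrib_left algebra_simps)
    finally show "A $$ (i,j) = sdm n U (\<lambda>i. complex_of_real (Re (d i))) $$ (i,j)" by simp
  qed (insert A Um, auto)
  moreover have "B = sdm n U (\<lambda>i. complex_of_real (Im (d i)))"
  proof (rule eq_matI)
    fix i j assume "i < dim_row (sdm n U (\<lambda>i. complex_of_real (Im (d i))))" "j < dim_col (sdm n U (\<lambda>i. complex_of_real (Im (d i))))"
    hence i: "i < n" and j: "j < n" using Um by auto
    have "2 * \<i> * B $$ (i,j) = N $$ (i,j) + (-1) * cnj (N $$ (j,i))"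
      using i j by (simp add: Nij hermitian_entry[OF hA, of j i] hermitian_entry[OF hB, of j i])
    also have "\<dots> = (\<Sum>l<n. U $$ (i,l) * (2 * \<i> * complex_of_real (Im (d l))) * cnj (U $$ (j,l)))"
      unfolding key[OF i j] by (intro sum.cong refl, simp add: complex_diff_cnj)
    also have "\<dots> = 2 * \<i> * sdm n U (\<lambda>i. complex_of_real (Im (d i))) $$ (i,j)"
      by (simp add: sdm_index[OF Um i j] sum_distrib_left algebra_simps)
    finally show "B $$ (i,j) = sdm n U (\<lambda>i. complex_of_real (Im (d i))) $$ (i,j)" by simp
  qed (insert B Um, auto)
  ultimately show ?thesis using U
    by (intro exI[of _ U] exI[of _ "\<lambda>i. Re (d i)"] exI[of _ "\<lambda>i. Im (d i)"], auto)
qed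



lemma unitary_cancel1: "unitary_mat n U \<Longrightarrow> X \<in> carrier_mat n k \<Longrightarrow> mat_adjoint U * (U * X) = X"
proof -
  assume U: "unitary_mat n U" and X: "X \<in> carrier_mat n k"
  have Um: "U \<in> carrier_mat n n" using U unitary_carrier by auto
  have "mat_adjoint U * (U * X) = (mat_adjoint U * U) * X"
    by (rule assoc_mult_mat[symmetric, of _ n n _ n _ k], insert Um X, auto)
  also have "\<dots> = X" unfolding unitary_adj_mult[OF U] using X by simp
  finally show ?thesis .
qed

lemma unitary_cancel2: "unitary_mat n U \<Longrightarrow> X \<in> carrier_mat n k \<Longrightarrow> U * (mat_adjoint U * X) = X"
proof -
  assume U: "unitary_mat n U" and X: "X \<in> carrier_mat n k"
  have Um: "U \<in> carrier_mat n n" using U unitary_carrier by auto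
  have "U * (mat_adjoint U * X) = (U * mat_adjoint U) * X"
    by (rule assoc_mult_mat[symmetric, of _ n n _ n _ k], insert Um X, auto)
  also have "\<dots> = X" using U X unfolding unitary_mat_def by simp
  finally show ?thesis .
qed

lemma sdm_alt: "sdm n U d = U * (mat_diag n d * mat_adjoint U)" if "U \<in> carrier_mat n n"
  unfolding sdm_def by (rule assoc_mult_mat[of _ n n _ n _ n], insert that, auto)

lemma sdm_sub: assumes U: "U \<in> carrier_mat n n"
  shows "sdm n U a - sdm n U b = sdm n U (\<lambda>i. a i - b i)"
proof (rule eq_matI)
  fix i j assume "i < dim_row (sdm n U (\<lambda>i. a i - b i))" "j < dim_col (sdm n U (\<lambda>i. a i - b i))"
  hence i: "i < n" and j: "j < n" using U by auto
  show "(sdm n U a - sdm n U b) $$ (i,j) = sdm n U (\<lambda>i. a i - b i) $$ (i,j)"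
    using i j U by (simp add: sdm_index sum_subtractf[symmetric] algebra_simps)
qed (insert U, auto)

lemma sdm_mult: assumes U: "unitary_mat n U"
  shows "sdm n U a * sdm n U b = sdm n U (\<lambda>i. a i * b i)"
proof -
  have Um: "U \<in> carrier_mat n n" using U unitary_carrier by auto
  have "sdm n U a * sdm n U b = U * (mat_diag n a * (mat_adjoint U * (U * (mat_diag n b * mat_adjoint U))))"
    unfolding sdm_def using Um by (simp add: assoc_mult_mat[of _ n n _ n _ n])
  also have "\<dots> = U * (mat_diag n a * (mat_diag n b * mat_adjoint U))"
    using U Um by (subst unitary_cancel1[OF U, of _ n], auto)
  also have "\<dots> = U * (mat_diag n a * mat_diag n b * mat_adjoint U)"
    using Um by (subst assoc_mult_mat[of "mat_diag n a" n n _ n _ n], auto)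
  also have "\<dots> = sdm n U (\<lambda>i. a i * b i)"
    unfolding sdm_alt[OF Um] by simp
  finally show ?thesis .
qed

lemma sdm_trace: assumes U: "unitary_mat n U"
  shows "mtrace (sdm n U a) = (\<Sum>i<n. a i)"
proof -
  have Um: "U \<in> carrier_mat n n" using U unitary_carrier by auto
  have "mtrace (sdm n U a) = (\<Sum>i<n. \<Sum>l<n. U $$ (i,l) * a l * cnj (U $$ (i,l)))"
    unfolding mtrace_def using Um by (simp add: sdm_index)
  also have "\<dots> = (\<Sum>l<n. a l * (\<Sum>i<n. cnj (U $$ (i,l)) * U $$ (i,l)))"
    by (subst sum.swap, simp add: sum_distrib_left mult_ac)
  also have "\<dots> = (\<Sum>l<n. a l)" using unitary_cols[OF U] by simp
  finally show ?thesis .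
qed

lemma sdm_uniq:
  assumes U: "unitary_mat n U" and V: "unitary_mat n V"
    and eq: "sdm n U (\<lambda>i. complex_of_real (d i)) = sdm n V (\<lambda>i. complex_of_real (e i))"
  shows "sdm n U (\<lambda>i. complex_of_real (f (d i))) = sdm n V (\<lambda>i. complex_of_real (f (e i)))"
proof -
  have Um: "U \<in> carrier_mat n n" using U unitary_carrier by auto
  have Vm: "V \<in> carrier_mat n n" using V unitary_carrier by auto
  have aU: "mat_adjoint U \<in> carrier_mat n n" "mat_adjoint V \<in> carrier_mat n n" using Um Vm by auto
  have UaU: "mat_adjoint U * U = 1\<^sub>m n" using unitary_adj_mult[OF U] .
  have UUa: "U * mat_adjoint U = 1\<^sub>m n" using U unfolding unitary_mat_def by auto
  have VVa: "V * mat_adjoint V = 1\<^sub>m n" using V unfolding unitary_mat_def by auto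
  define G where "G = mat_adjoint V * U"
  have G: "G \<in> carrier_mat n n" unfolding G_def using Um Vm by auto
  let ?Dd = "mat_diag n (\<lambda>i. complex_of_real (d i))"
  let ?De = "mat_diag n (\<lambda>i. complex_of_real (e i))"
  let ?Dfd = "mat_diag n (\<lambda>i. complex_of_real (f (d i)))"
  let ?Dfe = "mat_diag n (\<lambda>i. complex_of_real (f (e i)))"
  have "G * ?Dd = mat_adjoint V * (U * (?Dd * (mat_adjoint U * U)))"
    unfolding G_def UaU using Um Vm aU by (simp add: assoc_mult_mat[of _ n n _ n _ n] right_mult_one_mat[of _ n n])
  also have "\<dots> = mat_adjoint V * (sdm n U (\<lambda>i. complex_of_real (d i)) * U)"
    unfolding sdm_def using Um Vm aU by (simp add: assoc_mult_mat[of _ n n _ n _ n])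
  also have "\<dots> = mat_adjoint V * (V * (?De * (mat_adjoint V * U)))"
    unfolding eq unfolding sdm_def using Um Vm aU by (simp add: assoc_mult_mat[of _ n n _ n _ n])
  also have "\<dots> = ?De * G" unfolding G_def using Um Vm aU 
    by (subst unitary_cancel1[OF V, of _ n], auto simp: assoc_mult_mat[of _ n n _ n _ n])
  finally have GD: "G * ?Dd = ?De * G" .
  have GDf: "G * ?Dfd = ?Dfe * G"
  proof (rule eq_matI)
    fix a b assume "a < dim_row (?Dfe * G)" "b < dim_col (?Dfe * G)"
    hence a: "a < n" and b: "b < n" using G by (auto simp: mat_diag_def)
    have "(G * ?Dd) $$ (a,b) = (?De * G) $$ (a,b)" using GD by simp
    hence "G $$ (a,b) * complex_of_real (d b) = complex_of_real (e a) * G $$ (a,b)"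
      using a b G by (simp add: mat_diag_mult_right[OF G] mat_diag_mult_left[OF G])
    hence "G $$ (a,b) = 0 \<or> d b = e a" by (auto simp: mult.commute)
    thus "(G * ?Dfd) $$ (a,b) = (?Dfe * G) $$ (a,b)"
      using a b G by (auto simp: mat_diag_mult_right[OF G] mat_diag_mult_left[OF G])
  qed (insert G, auto simp: mat_diag_def)
  have "sdm n U (\<lambda>i. complex_of_real (f (d i))) = V * (G * (?Dfd * mat_adjoint U))"
    unfolding G_def using Um Vm aU
    by (simp add: assoc_mult_mat[of _ n n _ n _ n] unitary_cancel2[OF V, of _ n] sdm_def)
  also have "\<dots> = V * (?Dfe * (G * mat_adjoint U))"
    using G aU Um by (simp add: assoc_mult_mat[of _ n n _ n _ n, symmetric] GDf)
  also have "\<dots> = sdm n V (\<lambda>i. complex_of_real (f (e i)))"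
    unfolding G_def sdm_def using Um Vm aU UUa
    by (simp add: assoc_mult_mat[of _ n n _ n _ n])
  finally show ?thesis .
qed

lemma mat_fun_sdm:
  assumes U: "unitary_mat n U"
  shows "mat_fun f n (sdm n U (\<lambda>i. complex_of_real (d i))) = sdm n U (\<lambda>i. complex_of_real (f (d i)))"
proof -
  let ?A = "sdm n U (\<lambda>i. complex_of_real (d i))"
  let ?P = "\<lambda>B. \<exists>V e. unitary_mat n V \<and> ?A = sdm n V (\<lambda>i. complex_of_real (e i)) \<and>
       B = sdm n V (\<lambda>i. complex_of_real (f (e i)))"
  have ex: "?P (sdm n U (\<lambda>i. complex_of_real (f (d i))))" using U by blast
  have "?P (SOME B. ?P B)" by (rule someI, rule ex)
  then obtain V e where V: "unitary_mat n V" and eq: "?A = sdm n V (\<lambda>i. complex_of_real (e i))"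
    and B: "(SOME B. ?P B) = sdm n V (\<lambda>i. complex_of_real (f (e i)))" by blast
  have "mat_fun f n ?A = (SOME B. ?P B)" unfolding mat_fun_def sdm_def ..
  also have "\<dots> = sdm n U (\<lambda>i. complex_of_real (f (d i)))" unfolding B
    using sdm_uniq[OF U V eq, of f] by simp
  finally show ?thesis .
qed



definition quad :: "nat \<Rightarrow> complex mat \<Rightarrow> nat \<Rightarrow> complex mat \<Rightarrow> complex" where
  "quad n V j X = (\<Sum>a<n. \<Sum>b<n. cnj (V $$ (a,j)) * X $$ (a,b) * V $$ (b,j))"

lemma quad_sdm: assumes V: "unitary_mat n V" and j: "j < n"
  shows "quad n V j (sdm n V d) = d j"
proof -
  have Vm: "V \<in> carrier_mat n n" using V unitary_carrier by auto
  have "quad n V j (sdm n V d) = (\<Sum>a<n. \<Sum>b<n. \<Sum>l<n. cnj (V $$ (a,j)) * V $$ (a,l) * d l * (cnj (V $$ (b,l)) * V $$ (b,j)))"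
    unfolding quad_def by (intro sum.cong refl, simp add: sdm_index[OF Vm] sum_distrib_left sum_distrib_right mult_ac)
  also have "\<dots> = (\<Sum>l<n. (\<Sum>a<n. cnj (V $$ (a,j)) * V $$ (a,l)) * d l * (\<Sum>b<n. cnj (V $$ (b,l)) * V $$ (b,j)))"
  proof -
    have "(\<Sum>a<n. \<Sum>b<n. \<Sum>l<n. cnj (V $$ (a,j)) * V $$ (a,l) * d l * (cnj (V $$ (b,l)) * V $$ (b,j)))
      = (\<Sum>a<n. \<Sum>l<n. \<Sum>b<n. cnj (V $$ (a,j)) * V $$ (a,l) * d l * (cnj (V $$ (b,l)) * V $$ (b,j)))"
      by (rule sum.cong[OF refl], rule sum.swap)
    also have "\<dots> = (\<Sum>l<n. \<Sum>a<n. \<Sum>b<n. cnj (V $$ (a,j)) * V $$ (a,l) * d l * (cnj (V $$ (b,l)) * V $$ (b,j)))"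
      by (rule sum.swap)
    also have "\<dots> = (\<Sum>l<n. (\<Sum>a<n. cnj (V $$ (a,j)) * V $$ (a,l) * d l) * (\<Sum>b<n. cnj (V $$ (b,l)) * V $$ (b,j)))"
      by (simp only: sum_product)
    also have "\<dots> = (\<Sum>l<n. (\<Sum>a<n. cnj (V $$ (a,j)) * V $$ (a,l)) * d l * (\<Sum>b<n. cnj (V $$ (b,l)) * V $$ (b,j)))"
      by (simp only: sum_distrib_right)
    finally show ?thesis .
  qed
  also have "\<dots> = (\<Sum>l<n. (if j = l then d l else 0))"
    by (intro sum.cong refl, insert j, auto simp: unitary_cols[OF V])
  also have "\<dots> = d j" using j by simp
  finally show ?thesis .
qed

lemma quad_cdot: assumes X: "X \<in> carrier_mat n n" and V: "V \<in> carrier_mat n n" and j: "j < n"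
  shows "(X *\<^sub>v col V j) \<bullet>c col V j = quad n V j X"
  unfolding quad_def using X V j
  by (auto simp: scalar_prod_def mult_mat_vec_def row_def col_def lessThan_atLeast0 sum_distrib_right sum_distrib_left mult_ac
      intro!: sum.cong)

lemma quad_psd: assumes "psd_mat n X" "V \<in> carrier_mat n n" "j < n"
  shows "Re (quad n V j X) \<ge> 0"
proof -
  have X: "X \<in> carrier_mat n n" using assms unfolding psd_mat_def hermitian_mat_def by auto
  have "col V j \<in> carrier_vec n" using assms by auto
  hence "Re ((X *\<^sub>v col V j) \<bullet>c col V j) \<ge> 0" using assms unfolding psd_mat_def by auto
  thus ?thesis using quad_cdot[OF X assms(2,3)] by simp
qed

lemma quad_lin: assumes X: "X \<in> carrier_mat n n" and Y: "Y \<in> carrier_mat n n"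
  shows "quad n V j (a \<cdot>\<^sub>m X + b \<cdot>\<^sub>m Y) = a * quad n V j X + b * quad n V j Y"
proof -
  have "quad n V j (a \<cdot>\<^sub>m X + b \<cdot>\<^sub>m Y) = (\<Sum>i<n. \<Sum>k<n. a * (cnj (V $$ (i,j)) * X $$ (i,k) * V $$ (k,j)) + b * (cnj (V $$ (i,j)) * Y $$ (i,k) * V $$ (k,j)))"
    unfolding quad_def
  proof (intro sum.cong refl)
    fix i k assume "i \<in> {..<n}" "k \<in> {..<n}"
    thus "cnj (V $$ (i,j)) * (a \<cdot>\<^sub>m X + b \<cdot>\<^sub>m Y) $$ (i,k) * V $$ (k,j) = a * (cnj (V $$ (i,j)) * X $$ (i,k) * V $$ (k,j)) + b * (cnj (V $$ (i,j)) * Y $$ (i,k) * V $$ (k,j))"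
      using X Y by (simp add: ring_distribs mult_ac)
  qed
  also have "\<dots> = a * quad n V j X + b * quad n V j Y" unfolding quad_def
    by (simp only: sum.distrib sum_distrib_left)
  finally show ?thesis .
qed

lemma sum_quad: assumes V: "unitary_mat n V" and X: "X \<in> carrier_mat n n"
  shows "(\<Sum>j<n. quad n V j X) = mtrace X"
proof -
  have "(\<Sum>j<n. quad n V j X) = (\<Sum>a<n. \<Sum>b<n. X $$ (a,b) * (\<Sum>j<n. V $$ (b,j) * cnj (V $$ (a,j))))"
  proof -
    have "(\<Sum>j<n. quad n V j X) = (\<Sum>a<n. \<Sum>j<n. \<Sum>b<n. cnj (V $$ (a,j)) * X $$ (a,b) * V $$ (b,j))"
      unfolding quad_def by (rule sum.swap)
    also have "\<dots> = (\<Sum>a<n. \<Sum>b<n. \<Sum>j<n. cnj (V $$ (a,j)) * X $$ (a,b) * V $$ (b,j))"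
      by (rule sum.cong[OF refl], rule sum.swap)
    also have "\<dots> = (\<Sum>a<n. \<Sum>b<n. X $$ (a,b) * (\<Sum>j<n. V $$ (b,j) * cnj (V $$ (a,j))))"
      by (intro sum.cong refl, simp add: sum_distrib_left mult_ac)
    finally show ?thesis .
  qed
  also have "\<dots> = (\<Sum>a<n. X $$ (a,a))"
    by (intro sum.cong refl, simp add: unitary_rows[OF V] if_distrib cong: if_cong)
  also have "\<dots> = mtrace X" unfolding mtrace_def using X by simp
  finally show ?thesis .
qed

lemma ampliate1: assumes M: "M \<in> carrier_mat n n" and EM: "E M \<in> carrier_mat m m"
  shows "ampliate n m 1 E M = E M"
proof -
  have blk: "mat_block n M 0 0 = M" unfolding mat_block_def by (rule eq_matI, insert M, auto)
  show ?thesis unfolding ampliate_def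
    by (rule eq_matI, insert EM, auto simp: blk)
qed

definition proj :: "nat \<Rightarrow> complex mat \<Rightarrow> nat \<Rightarrow> complex mat" where
  "proj n U l = mat n n (\<lambda>(a,b). U $$ (a,l) * cnj (U $$ (b,l)))"

lemma proj_carrier[simp]: "proj n U l \<in> carrier_mat n n" unfolding proj_def by auto

lemma proj_psd: assumes U: "U \<in> carrier_mat n n" shows "psd_mat n (proj n U l)"
  unfolding psd_mat_def hermitian_mat_def
proof (intro conjI ballI proj_carrier)
  show "mat_adjoint (proj n U l) = proj n U l"
    by (rule eq_matI, auto simp: proj_def)
next
  fix v :: "complex vec" assume v: "v \<in> carrier_vec n"
  define s where "s = (\<Sum>b<n. cnj (U $$ (b,l)) * v $ b)"
  have "(proj n U l *\<^sub>v v) \<bullet>c v = (\<Sum>a<n. U $$ (a,l) * s * cnj (v $ a))"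
    using v unfolding s_def
    by (auto simp: proj_def scalar_prod_def mult_mat_vec_def row_def lessThan_atLeast0 sum_distrib_left sum_distrib_right mult_ac
      intro!: sum.cong)
  also have "\<dots> = s * cnj s" unfolding s_def 
    by (simp add: sum_distrib_left sum_distrib_right cnj_sum mult_ac)
  finally show "0 \<le> Re ((proj n U l *\<^sub>v v) \<bullet>c v)" by simp
qed

lemma channel_props:
  assumes E: "quantum_channel n m E"
  shows "\<And>X. X \<in> carrier_mat n n \<Longrightarrow> E X \<in> carrier_mat m m"
    "\<And>X Y a b. X \<in> carrier_mat n n \<Longrightarrow> Y \<in> carrier_mat n n \<Longrightarrow> E (a \<cdot>\<^sub>m X + b \<cdot>\<^sub>m Y) = a \<cdot>\<^sub>m E X + b \<cdot>\<^sub>m E Y"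
    "\<And>X. X \<in> carrier_mat n n \<Longrightarrow> mtrace (E X) = mtrace X"
    "\<And>X. psd_mat n X \<Longrightarrow> psd_mat m (E X)"
proof -
  show "\<And>X. X \<in> carrier_mat n n \<Longrightarrow> E X \<in> carrier_mat m m" using E unfolding quantum_channel_def by auto
  show "\<And>X Y a b. X \<in> carrier_mat n n \<Longrightarrow> Y \<in> carrier_mat n n \<Longrightarrow> E (a \<cdot>\<^sub>m X + b \<cdot>\<^sub>m Y) = a \<cdot>\<^sub>m E X + b \<cdot>\<^sub>m E Y"
    using E unfolding quantum_channel_def by auto
  show "\<And>X. X \<in> carrier_mat n n \<Longrightarrow> mtrace (E X) = mtrace X" using E unfolding quantum_channel_def by auto
  fix X assume X: "psd_mat n X"
  have Xc: "X \<in> carrier_mat n n" using X unfolding psd_mat_def hermitian_mat_def by auto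
  have EX: "E X \<in> carrier_mat m m" using E Xc unfolding quantum_channel_def by auto
  have "\<forall>k M. psd_mat (k * n) M \<longrightarrow> psd_mat (k * m) (ampliate n m k E M)"
    using E unfolding quantum_channel_def by blast
  hence "psd_mat (1 * n) X \<longrightarrow> psd_mat (1 * m) (ampliate n m 1 E X)" by blast
  hence "psd_mat (1 * m) (ampliate n m 1 E X)" using X by simp
  thus "psd_mat m (E X)" using ampliate1[of X n E m, OF Xc EX] by simp
qed

lemma channel_quad_sum:
  assumes E: "quantum_channel n m E" and U: "U \<in> carrier_mat n n"
  shows "quad m V j (E (sdm n U c)) = (\<Sum>l<n. c l * quad m V j (E (proj n U l)))"
proof -
  note ch = channel_props[OF E]
  define R where "R = (\<lambda>k. mat n n (\<lambda>(a,b). \<Sum>l<k. U $$ (a,l) * c l * cnj (U $$ (b,l))))"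
  have Rc: "R k \<in> carrier_mat n n" for k unfolding R_def by auto
  have "quad m V j (E (R k)) = (\<Sum>l<k. c l * quad m V j (E (proj n U l)))" for k
  proof (induction k)
    case 0
    have "R 0 = 0 \<cdot>\<^sub>m R 0 + 0 \<cdot>\<^sub>m R 0" by (rule eq_matI, auto simp: R_def)
    hence "E (R 0) = 0 \<cdot>\<^sub>m E (R 0) + 0 \<cdot>\<^sub>m E (R 0)" using ch(2)[OF Rc Rc] by metis
    hence "quad m V j (E (R 0)) = 0 * quad m V j (E (R 0)) + 0 * quad m V j (E (R 0))"
      using quad_lin[OF ch(1)[OF Rc] ch(1)[OF Rc]] by metis
    thus ?case by simp
  next
    case (Suc k)
    have "R (Suc k) = 1 \<cdot>\<^sub>m R k + c k \<cdot>\<^sub>m proj n U k"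
      by (rule eq_matI, auto simp: R_def proj_def algebra_simps)
    hence "E (R (Suc k)) = 1 \<cdot>\<^sub>m E (R k) + c k \<cdot>\<^sub>m E (proj n U k)" using ch(2)[OF Rc proj_carrier] by metis
    hence "quad m V j (E (R (Suc k))) = 1 * quad m V j (E (R k)) + c k * quad m V j (E (proj n U k))"
      using quad_lin[OF ch(1)[OF Rc] ch(1)[OF proj_carrier]] by metis
    thus ?case using Suc by simp
  qed
  moreover have "R n = sdm n U c" by (rule eq_matI, insert U, auto simp: R_def sdm_index)
  ultimately show ?thesis by metis
qed

lemma channel_proj_stoch:
  assumes E: "quantum_channel n m E" and U: "unitary_mat n U" and V: "unitary_mat m V" and l: "l < n"
  shows "(\<Sum>j<m. quad m V j (E (proj n U l))) = 1"
proof -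
  note ch = channel_props[OF E]
  have "(\<Sum>j<m. quad m V j (E (proj n U l))) = mtrace (E (proj n U l))"
    by (rule sum_quad[OF V ch(1)[OF proj_carrier]])
  also have "\<dots> = mtrace (proj n U l)" by (rule ch(3)[OF proj_carrier])
  also have "\<dots> = (\<Sum>a<n. cnj (U $$ (a,l)) * U $$ (a,l))" unfolding mtrace_def proj_def
    by (simp add: mult.commute)
  also have "\<dots> = 1" using unitary_cols[OF U l l] by simp
  finally show ?thesis .
qed

lemma channel_proj_nonneg:
  assumes E: "quantum_channel n m E" and U: "U \<in> carrier_mat n n" and V: "V \<in> carrier_mat m m" and j: "j < m"
  shows "Re (quad m V j (E (proj n U l))) \<ge> 0"
  using channel_props(4)[OF E proj_psd[OF U]] quad_psd[OF _ V j] by blast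



definition hh :: "real \<Rightarrow> real" where "hh r = r * (ln r - 1)^2"

lemma hh_deriv: "y > 0 \<Longrightarrow> DERIV (\<lambda>y. c0 + c1 * (y - s) - hh y) y :> (c1 - ((ln y)^2 - 1))"
  unfolding hh_def
  by (rule derivative_eq_intros refl | simp)+ (simp add: field_simps power2_eq_square)

lemma tangent:
  fixes r s :: real
  assumes r0: "0 \<le> r" and r1: "r \<le> 1" and s0: "0 < s" and s1: "s \<le> 1"
  shows "hh r \<le> hh s + ((ln s)^2 - 1) * (r - s)"
proof (cases "r = 0")
  case True
  have "hh s + ((ln s)^2 - 1) * (r - s) = 2 * s * (1 - ln s)"
    unfolding hh_def True by (simp add: algebra_simps power2_eq_square)
  moreover have "ln s \<le> 0" using s0 s1 by simp
  hence l1: "1 - ln s \<ge> 0" by simp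
  have "2 * s * (1 - ln s) \<ge> 0" using s0 l1 by simp
  ultimately show ?thesis using True unfolding hh_def by simp
next
  case False
  hence r0': "r > 0" using r0 by simp
  define phi where "phi = (\<lambda>y. hh s + ((ln s)^2 - 1) * (y - s) - hh y)"
  have der: "DERIV phi y :> ((ln s)^2 - (ln y)^2)" if "y > 0" for y
    using hh_deriv[OF that, of "hh s" "(ln s)^2 - 1" s] unfolding phi_def by simp
  have "phi r \<ge> phi s"
  proof (cases "r \<le> s")
    case True
    show ?thesis
    proof (rule DERIV_nonpos_imp_nonincreasing[of r s phi, OF True])
      fix y assume y: "r \<le> y" "y \<le> s"
      hence yp: "y > 0" using r0' by simp
      have "ln y \<le> ln s" using y yp by simp
      moreover have "ln s \<le> 0" using s0 s1 by simp
      ultimately have "(- ln s)^2 \<le> (- ln y)^2" by (intro power_mono, auto)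
      hence "(ln s)^2 \<le> (ln y)^2" by simp
      thus "\<exists>d. DERIV phi y :> d \<and> d \<le> 0" using der[OF yp] by auto
    qed
  next
    case False
    show ?thesis
    proof (rule DERIV_nonneg_imp_nondecreasing[of s r phi])
      show "s \<le> r" using False by simp
      fix y assume y: "s \<le> y" "y \<le> r"
      hence yp: "y > 0" using s0 by simp
      have "ln s \<le> ln y" using y yp s0 by simp
      moreover have "ln y \<le> 0" using y r1 yp by simp
      ultimately have "(- ln y)^2 \<le> (- ln s)^2" by (intro power_mono, auto)
      hence "(ln y)^2 \<le> (ln s)^2" by simp
      thus "\<exists>d. DERIV phi y :> d \<and> d \<ge> 0" using der[OF yp] by auto
    qed
  qed
  moreover have "phi s = 0" unfolding phi_def by simp
  ultimately show ?thesis unfolding phi_def by simp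
qed

lemma hh0[simp]: "hh 0 = 0" unfolding hh_def by simp

lemma jensen_hh:
  fixes w r :: "nat \<Rightarrow> real"
  assumes w: "\<And>i. i < n \<Longrightarrow> w i \<ge> 0" and r: "\<And>i. i < n \<Longrightarrow> 0 \<le> r i \<and> r i \<le> 1"
    and Q: "(\<Sum>i<n. w i) > 0"
  shows "(\<Sum>i<n. w i * hh (r i)) \<le> (\<Sum>i<n. w i) * hh ((\<Sum>i<n. w i * r i) / (\<Sum>i<n. w i))"
proof -
  define Q where "Q = (\<Sum>i<n. w i)"
  define S where "S = (\<Sum>i<n. w i * r i)"
  define s where "s = S / Q"
  have S0: "S \<ge> 0" unfolding S_def using w r by (intro sum_nonneg, auto)
  have SQ: "S \<le> Q" unfolding S_def Q_def
    by (intro sum_mono, insert w r, auto intro: mult_left_le)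
  have Qp: "Q > 0" using Q unfolding Q_def .
  have s0: "s \<ge> 0" and s1: "s \<le> 1" unfolding s_def using S0 SQ Qp by auto
  show "(\<Sum>i<n. w i * hh (r i)) \<le> Q * hh (S / Q)"
  proof (cases "s = 0")
    case True
    hence "S = 0" unfolding s_def using Qp by auto
    hence "\<forall>i\<in>{..<n}. w i * r i = 0" unfolding S_def
      by (subst (asm) sum_nonneg_eq_0_iff, insert w r, auto)
    hence "\<forall>i\<in>{..<n}. w i * hh (r i) = 0" unfolding hh_def by auto
    hence "(\<Sum>i<n. w i * hh (r i)) = 0" by (intro sum.neutral, auto)
    moreover have "Q * hh (S / Q) = 0" using True unfolding s_def[symmetric] by simp
    ultimately show ?thesis by (simp del: mult_eq_0_iff)
  next
    case False
    hence sp: "s > 0" using s0 by simp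
    have "(\<Sum>i<n. w i * hh (r i)) \<le> (\<Sum>i<n. w i * (hh s + ((ln s)^2 - 1) * (r i - s)))"
      by (intro sum_mono mult_left_mono tangent, insert w r sp s1, auto)
    also have "\<dots> = Q * hh s + ((ln s)^2 - 1) * (S - Q * s)"
      unfolding Q_def S_def by (simp add: algebra_simps sum.distrib sum_distrib_left sum_distrib_right sum_subtractf)
    also have "S - Q * s = 0" unfolding s_def using Qp by simp
    finally show ?thesis unfolding s_def by simp
  qed
qed

lemma term_eq:
  fixes x p q :: real
  assumes x: "x > 0" and q: "q > 0" and p: "p \<ge> 0"
  shows "p * (log2' p - log2' q - (1 / ln 2 - log 2 x))^2 = q * hh (x * p / q) / (x * (ln 2)^2)"
proof (cases "p = 0")
  case True thus ?thesis by simp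
next
  case False
  hence pp: "p > 0" using p by simp
  have l: "ln (x * p / q) = ln x + ln p - ln q" using x pp q by (simp add: ln_div ln_mult)
  have "q * hh (x * p / q) / (x * (ln 2)^2) = p * (ln x + ln p - ln q - 1)^2 / (ln 2)^2"
    unfolding hh_def l using x q by (simp add: field_simps)
  also have "\<dots> = p * (log2' p - log2' q - (1 / ln 2 - log 2 x))^2"
    unfolding log2'_def using x pp q by (simp add: log_def field_simps power2_eq_square)
  finally show ?thesis by simp
qed

lemma classical:
  fixes p q :: "nat \<Rightarrow> real" and W :: "nat \<Rightarrow> nat \<Rightarrow> real" and x c :: real
  assumes x: "x > 0" and c: "c = 1 / ln 2 - log 2 x"
    and p: "\<And>i. i < n \<Longrightarrow> p i \<ge> 0" and q: "\<And>i. i < n \<Longrightarrow> q i > 0"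
    and pq: "\<And>i. i < n \<Longrightarrow> x * p i \<le> q i"
    and W: "\<And>i j. i < n \<Longrightarrow> j < m \<Longrightarrow> W j i \<ge> 0"
    and Ws: "\<And>i. i < n \<Longrightarrow> (\<Sum>j<m. W j i) = 1"
    and q': "\<And>j. j < m \<Longrightarrow> (\<Sum>i<n. W j i * q i) > 0"
  shows "(\<Sum>i<n. p i * (log2' (p i) - log2' (q i) - c)^2)
    \<le> (\<Sum>j<m. (\<Sum>i<n. W j i * p i) * (log2' (\<Sum>i<n. W j i * p i) - log2' (\<Sum>i<n. W j i * q i) - c)^2)"
proof -
  define K where "K = x * (ln 2)^2"
  have K: "K > 0" unfolding K_def using x by simp
  define r where "r = (\<lambda>i. x * p i / q i)"
  have r: "0 \<le> r i \<and> r i \<le> 1" if "i < n" for i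
    unfolding r_def using p[OF that] q[OF that] pq[OF that] x by auto
  have "(\<Sum>i<n. p i * (log2' (p i) - log2' (q i) - c)^2) = (\<Sum>i<n. q i * hh (r i)) / K"
    unfolding c K_def r_def by (simp add: term_eq[OF x q p] sum_divide_distrib)
  also have "(\<Sum>i<n. q i * hh (r i)) = (\<Sum>j<m. \<Sum>i<n. (W j i * q i) * hh (r i))"
  proof -
    have "(\<Sum>j<m. \<Sum>i<n. (W j i * q i) * hh (r i)) = (\<Sum>i<n. \<Sum>j<m. (W j i * q i) * hh (r i))"
      by (rule sum.swap)
    also have "\<dots> = (\<Sum>i<n. (\<Sum>j<m. W j i) * (q i * hh (r i)))"
      by (intro sum.cong refl, subst sum_distrib_right, simp add: mult_ac)
    also have "\<dots> = (\<Sum>i<n. q i * hh (r i))" by (simp add: Ws)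
    finally show ?thesis by simp
  qed
  also have "\<dots> \<le> (\<Sum>j<m. (\<Sum>i<n. W j i * q i) * hh ((\<Sum>i<n. (W j i * q i) * r i) / (\<Sum>i<n. W j i * q i)))"
  proof (intro sum_mono jensen_hh)
    fix j i assume j: "j \<in> {..<m}" and i: "i < n"
    show "W j i * q i \<ge> 0" using W[OF i] q[OF i] j by (simp add: less_imp_le)
  qed (insert r q', auto)
  also have "\<dots> = (\<Sum>j<m. (\<Sum>i<n. W j i * q i) * hh (x * (\<Sum>i<n. W j i * p i) / (\<Sum>i<n. W j i * q i)))"
  proof -
    have "(\<Sum>i<n. (W j i * q i) * r i) = x * (\<Sum>i<n. W j i * p i)" for j
      unfolding r_def sum_distrib_left
    proof (intro sum.cong refl)
      fix i assume "i \<in> {..<n}"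
      hence "q i > 0" using q by auto
      thus "W j i * q i * (x * p i / q i) = x * (W j i * p i)" by simp
    qed
    thus ?thesis by simp
  qed
  finally have "(\<Sum>i<n. p i * (log2' (p i) - log2' (q i) - c)^2) \<le> 
     (\<Sum>j<m. (\<Sum>i<n. W j i * q i) * hh (x * (\<Sum>i<n. W j i * p i) / (\<Sum>i<n. W j i * q i))) / K"
    using K by (simp add: divide_right_mono)
  also have "\<dots> = (\<Sum>j<m. (\<Sum>i<n. W j i * p i) * (log2' (\<Sum>i<n. W j i * p i) - log2' (\<Sum>i<n. W j i * q i) - c)^2)"
    unfolding sum_divide_distrib
  proof (intro sum.cong refl)
    fix j assume j: "j \<in> {..<m}"
    have "(\<Sum>i<n. W j i * p i) \<ge> 0" using W p j by (intro sum_nonneg, auto)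
    thus "(\<Sum>i<n. W j i * q i) * hh (x * (\<Sum>i<n. W j i * p i) / (\<Sum>i<n. W j i * q i)) / K =
      (\<Sum>i<n. W j i * p i) * (log2' (\<Sum>i<n. W j i * p i) - log2' (\<Sum>i<n. W j i * q i) - c)^2"
      unfolding c K_def using term_eq[OF x q'] j by simp
  qed
  finally show ?thesis .
qed



lemma spectrum_sdm: assumes U: "unitary_mat n U"
  shows "spectrum (sdm n U d) = d ` {..<n}"
proof -
  have Um: "U \<in> carrier_mat n n" using U unitary_carrier by auto
  let ?D = "mat_diag n d"
  have sim: "similar_mat (sdm n U d) ?D" unfolding similar_mat_def
  proof (intro exI)
    show "similar_mat_wit (sdm n U d) ?D U (mat_adjoint U)"
      unfolding similar_mat_wit_def Let_def using Um U unitary_adj_mult[OF U]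
      by (auto simp: sdm_def unitary_mat_def)
  qed
  have ut: "upper_triangular ?D" unfolding upper_triangular_def mat_diag_def by auto
  have cp: "char_poly (sdm n U d) = (\<Prod>a\<leftarrow>diag_mat ?D. [:- a, 1:])"
    unfolding char_poly_similar[OF sim] by (rule char_poly_upper_triangular[OF mat_diag_dim ut])
  have dl: "diag_mat ?D = map d [0..<n]" unfolding diag_mat_def mat_diag_def by auto
  have "spectrum (sdm n U d) = {k. poly (char_poly (sdm n U d)) k = 0}"
    by (rule spectrum_root_char_poly[OF sdm_carrier[OF Um]])
  also have "\<dots> = {k. (\<Prod>a\<leftarrow>map d [0..<n]. k - a) = 0}"
    unfolding cp dl by (simp add: poly_prod_list o_def)
  also have "\<dots> = d ` {..<n}" by (auto simp: prod_list_zero_iff)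
  finally show ?thesis .
qed

lemma trace_real: assumes U: "unitary_mat n U"
  shows "Re (mtrace (sdm n U (\<lambda>i. complex_of_real (f i)))) = (\<Sum>i<n. f i)"
  unfolding sdm_trace[OF U] by simp

lemma M_eq:
  assumes U: "unitary_mat n U"
    and r: "\<rho> = sdm n U (\<lambda>i. complex_of_real (a i))" and s: "\<sigma> = sdm n U (\<lambda>i. complex_of_real (b i))"
    and a1: "(\<Sum>i<n. a i) = 1"
  shows "M_quantity x n \<rho> \<sigma> = (\<Sum>i<n. a i * (log2' (a i) - log2' (b i) - (1 / ln 2 - log 2 x))^2)"
proof -
  have Um: "U \<in> carrier_mat n n" using U unitary_carrier by auto
  define l where "l = (\<lambda>i. log2' (a i) - log2' (b i))"
  have L: "mat_log n \<rho> - mat_log n \<sigma> = sdm n U (\<lambda>i. complex_of_real (l i))"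
    unfolding mat_log_def r s mat_fun_sdm[OF U] sdm_sub[OF Um] l_def by simp
  have S: "rel_entropy n \<rho> \<sigma> = (\<Sum>i<n. a i * l i)"
    unfolding rel_entropy_def L unfolding r sdm_mult[OF U] 
    using trace_real[OF U, of "\<lambda>i. a i * l i"] by simp
  have V: "rel_variance n \<rho> \<sigma> = (\<Sum>i<n. a i * (l i)^2) - (\<Sum>i<n. a i * l i)^2"
    unfolding rel_variance_def S L unfolding r sdm_mult[OF U] 
    using trace_real[OF U, of "\<lambda>i. a i * (l i * l i)"] by (simp add: power2_eq_square)
  define c where "c = 1 / ln 2 - log 2 x"
  have "M_quantity x n \<rho> \<sigma> = (\<Sum>i<n. a i * (l i)^2) - (\<Sum>i<n. a i * l i)^2 + (c - (\<Sum>i<n. a i * l i))^2"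
    unfolding M_quantity_def V S c_def ..
  also have "\<dots> = (\<Sum>i<n. a i * (l i)^2) - 2 * c * (\<Sum>i<n. a i * l i) + c^2 * (\<Sum>i<n. a i)"
    unfolding a1 by (simp add: power2_eq_square algebra_simps)
  also have "\<dots> = (\<Sum>i<n. a i * (l i - c)^2)"
    by (simp add: power2_eq_square algebra_simps sum.distrib sum_subtractf sum_distrib_left)
  finally show ?thesis unfolding l_def c_def .
qed



lemma density_facts:
  assumes d: "density_mat n \<rho>" and U: "unitary_mat n U" and r: "\<rho> = sdm n U (\<lambda>i. complex_of_real (a i))"
  shows "\<And>i. i < n \<Longrightarrow> a i \<ge> 0" "(\<Sum>i<n. a i) = 1" "\<And>i. i < n \<Longrightarrow> a i \<le> 1" "n > 0"
proof -
  have Um: "U \<in> carrier_mat n n" using U unitary_carrier by auto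
  have psd: "psd_mat n \<rho>" and tr: "mtrace \<rho> = 1" using d unfolding density_mat_def by auto
  show nn: "a i \<ge> 0" if i: "i < n" for i
    using quad_psd[OF psd Um i] quad_sdm[OF U i] r by simp
  show s1: "(\<Sum>i<n. a i) = 1" using trace_real[OF U, of a] tr r by simp
  show "a i \<le> 1" if i: "i < n" for i
  proof -
    have "a i \<le> (\<Sum>i<n. a i)" by (rule member_le_sum, insert i nn, auto)
    thus ?thesis using s1 by simp
  qed
  show "n > 0" using s1 by (cases n, auto)
qed

lemma full_rank_pos:
  assumes d: "density_mat n \<sigma>" and U: "unitary_mat n U" and s: "\<sigma> = sdm n U (\<lambda>i. complex_of_real (b i))"
    and f: "full_rank_mat \<sigma>" and i: "i < n"
  shows "b i > 0"
proof -
  have "b i \<ge> 0" using density_facts[OF d U s] i by auto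
  moreover have "complex_of_real (b i) \<notin> (\<lambda>i. complex_of_real (b i)) ` {..<n} \<Longrightarrow> False" using i by auto
  hence "b i \<noteq> 0" using f unfolding full_rank_mat_def s spectrum_sdm[OF U] by force
  ultimately show ?thesis by simp
qed

theorem theorem12:
  fixes n m :: nat and \<rho> \<sigma> \<rho>' \<sigma>' :: "complex mat"
  assumes "density_mat n \<rho>" and "density_mat n \<sigma>"
    and "\<rho> * \<sigma> = \<sigma> * \<rho>"
    and "density_mat m \<rho>'" and "density_mat m \<sigma>'"
    and "\<rho>' * \<sigma>' = \<sigma>' * \<rho>'"
    and "full_rank_mat \<sigma>" and "full_rank_mat \<sigma>'"
    and "majorizes_pair n \<rho> \<sigma> m \<rho>' \<sigma>'"
  shows "M_quantity (min_eigenvalue \<sigma>) m \<rho>' \<sigma>' \<ge> M_quantity (min_eigenvalue \<sigma>) n \<rho> \<sigma>"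
proof -
  note dr = assms(1) and ds = assms(2) and dr' = assms(4) and ds' = assms(5)
  have herm: "hermitian_mat k X" if "density_mat k X" for k X
    using that unfolding density_mat_def psd_mat_def by auto
  obtain U a b where U: "unitary_mat n U" and r: "\<rho> = sdm n U (\<lambda>i. complex_of_real (a i))"
    and s: "\<sigma> = sdm n U (\<lambda>i. complex_of_real (b i))"
    using commuting_hermitian_diag[OF herm[OF dr] herm[OF ds] assms(3)] by blast
  obtain V a' b' where V: "unitary_mat m V" and r': "\<rho>' = sdm m V (\<lambda>i. complex_of_real (a' i))"
    and s': "\<sigma>' = sdm m V (\<lambda>i. complex_of_real (b' i))"
    using commuting_hermitian_diag[OF herm[OF dr'] herm[OF ds'] assms(6)] by blast
  obtain E where E: "quantum_channel n m E" and Er: "E \<rho> = \<rho>'" and Es: "E \<sigma> = \<sigma>'"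
    using assms(9) unfolding majorizes_pair_def by blast
  have Um: "U \<in> carrier_mat n n" using U unitary_carrier by auto
  have Vm: "V \<in> carrier_mat m m" using V unitary_carrier by auto
  note fr = density_facts[OF dr U r]
  note fr' = density_facts[OF dr' V r']
  have bpos: "\<And>i. i < n \<Longrightarrow> b i > 0" using full_rank_pos[OF ds U s assms(7)] .
  have bpos': "\<And>j. j < m \<Longrightarrow> b' j > 0" using full_rank_pos[OF ds' V s' assms(8)] .
  define x where "x = min_eigenvalue \<sigma>"
  have x: "x = Min (b ` {..<n})" unfolding x_def min_eigenvalue_def s spectrum_sdm[OF U] image_image by simp
  have fin: "finite (b ` {..<n})" and ne: "b ` {..<n} \<noteq> {}" using fr(4) by auto
  have xpos: "x > 0" unfolding x using Min_in[OF fin ne] bpos by auto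
  have xle: "x \<le> b i" if "i < n" for i unfolding x using Min_le[OF fin] that by auto
  have xab: "x * a i \<le> b i" if i: "i < n" for i
  proof -
    have "x * a i \<le> x * 1" using fr(1,3)[OF i] xpos by (intro mult_left_mono, auto)
    thus ?thesis using xle[OF i] by simp
  qed
  define W where "W = (\<lambda>j i. Re (quad m V j (E (proj n U i))))"
  have W0: "W j i \<ge> 0" if "i < n" "j < m" for i j unfolding W_def by (rule channel_proj_nonneg[OF E Um Vm that(2)])
  have Ws: "(\<Sum>j<m. W j i) = 1" if "i < n" for i
    unfolding W_def using channel_proj_stoch[OF E U V that] by (metis Re_sum one_complex.sel(1))
  have trans: "c' j = (\<Sum>i<n. W j i * c i)"
    if j: "j < m" and X: "X = sdm n U (\<lambda>i. complex_of_real (c i))" and X': "E X = sdm m V (\<lambda>i. complex_of_real (c' i))"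
    for j c c' X
  proof -
    have "complex_of_real (c' j) = quad m V j (E X)" unfolding X' by (rule quad_sdm[OF V j, symmetric])
    also have "\<dots> = (\<Sum>i<n. complex_of_real (c i) * quad m V j (E (proj n U i)))"
      unfolding X by (rule channel_quad_sum[OF E Um])
    finally have "c' j = Re (\<Sum>i<n. complex_of_real (c i) * quad m V j (E (proj n U i)))"
      by (metis Re_complex_of_real)
    thus ?thesis unfolding W_def by (simp add: mult.commute)
  qed
  have a'eq: "a' j = (\<Sum>i<n. W j i * a i)" if "j < m" for j using trans[OF that r] Er r' by simp
  have b'eq: "b' j = (\<Sum>i<n. W j i * b i)" if "j < m" for j using trans[OF that s] Es s' by simp
  have "M_quantity x n \<rho> \<sigma> = (\<Sum>i<n. a i * (log2' (a i) - log2' (b i) - (1 / ln 2 - log 2 x))^2)"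
    by (rule M_eq[OF U r s fr(2)])
  also have "\<dots> \<le> (\<Sum>j<m. (\<Sum>i<n. W j i * a i) * (log2' (\<Sum>i<n. W j i * a i) - log2' (\<Sum>i<n. W j i * b i) - (1 / ln 2 - log 2 x))^2)"
    by (rule classical[OF xpos refl fr(1) bpos xab W0 Ws], insert bpos' b'eq, auto)
  also have "\<dots> = (\<Sum>j<m. a' j * (log2' (a' j) - log2' (b' j) - (1 / ln 2 - log 2 x))^2)"
    by (intro sum.cong refl, simp add: a'eq b'eq)
  also have "\<dots> = M_quantity x m \<rho>' \<sigma>'"
    by (rule M_eq[OF V r' s' fr'(2), symmetric])
  finally show ?thesis unfolding x_def .
qed


end
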